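(* Let $\gamma>0$, $k,L>0$, $(g,o)$ a rooted graph and $\varepsilon>0$. For $N$ large enough, $$\mathbb{P}_{N,\gamma}\Big(\Big|\frac{\#\{i\in[N]:B^L_{(G_N,i)}(k)\simeq(g,o)\}}{N}-\mu^L_\gamma(k,(g,o))\Big|>\varepsilon\Big)<2\exp\Big\{-\frac{\varepsilon^2N}{8kL+2}\Big\},$$ where $\mu^L_\gamma(k,(g,o))=\mathbb{P}_\gamma\big(B^L_{(G,0)}(k)\simeq(g,o)\big)$.
   Context: Graphs are locally finite with vertex set in $\mathbb{Z}$; $d_g$ is graph distance; the length of an edge $\{i,j\}$ is $|i-j|$. $\mathbb{P}_{N,\gamma}$ is the law of the random graph $G_N$ on $[N]=\{1,\dots,N\}$ containing all edges $\{x,x+1\}$ and each other pair $\{x,y\}$ independently with probability $\exp\{-|x-y|^\gamma\}$; $\mathbb{P}_\gamma$ is the analogous law of a random graph $G$ on vertex set $\mathbb{Z}$. A rooted graph is $(g,o)$ with $o$ a vertex of $g$; $(g,o)\simeq(g',o')$ if the translation $x\mapsto x-o+o'$ maps $g$ exactly onto $g'$. $B_{(g,o)}(k)$ is the subgraph of $g$ induced on $\{x:d_g(o,x)\le k\}$, rooted at $o$; the truncated ball $B^L_{(g,o)}(k)$ is $B_{(g',o)}(k)$ where $g'$ is $g$ with all edges of length larger than $L$ removed. *)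

theory Defs
  imports "HOL-Probability.Probability"
begin

text \<open>A graph on a vertex set contained in the integers: a pair (V, E) with
  E a set of edges, each edge a two-element subset of V.\<close>
type_synonym igraph = "int set \<times> int set set"

definition elen :: "int set \<Rightarrow> nat" where
  "elen e = nat (Max e - Min e)"

definition is_rooted_graph :: "igraph \<Rightarrow> int \<Rightarrow> bool" where
  "is_rooted_graph g r \<longleftrightarrow> r \<in> fst g \<and>
     (\<forall>e\<in>snd g. e \<subseteq> fst g \<and> card e = 2) \<and>
     (\<forall>x\<in>fst g. finite {e\<in>snd g. x \<in> e})"

fun ball_verts :: "int set set \<Rightarrow> int \<Rightarrow> nat \<Rightarrow> int set" where
  "ball_verts E r 0 = {r}"
| "ball_verts E r (Suc k) = ball_verts E r k \<union> {y. \<exists>x\<in>ball_verts E r k. {x, y} \<in> E}"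

definition ball :: "igraph \<Rightarrow> int \<Rightarrow> nat \<Rightarrow> igraph" where
  "ball g r k = (let S = ball_verts (snd g) r k in (S, {e\<in>snd g. e \<subseteq> S}))"

definition trunc_ball :: "nat \<Rightarrow> igraph \<Rightarrow> int \<Rightarrow> nat \<Rightarrow> igraph" where
  "trunc_ball L g r k = ball (fst g, {e\<in>snd g. elen e \<le> L}) r k"

definition rooted_iso :: "igraph \<Rightarrow> int \<Rightarrow> igraph \<Rightarrow> int \<Rightarrow> bool" where
  "rooted_iso g r g' r' \<longleftrightarrow>
     (\<lambda>x. x - r + r') ` fst g = fst g' \<and>
     (\<lambda>e. (\<lambda>x. x - r + r') ` e) ` snd g = snd g'"

text \<open>Nearest-neighbour edges inside V (always present).\<close>
definition nn_edges :: "int set \<Rightarrow> int set set" where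
  "nn_edges V = {{x, x + 1} | x. x \<in> V \<and> x + 1 \<in> V}"

definition pairs_fin :: "nat \<Rightarrow> int set set" where
  "pairs_fin N = {{x, y} | x y. 1 \<le> x \<and> x + 2 \<le> y \<and> y \<le> int N}"

definition pairs_Z :: "int set set" where
  "pairs_Z = {{x, y} | x y. x + 2 \<le> y}"

definition edge_prob :: "real \<Rightarrow> int set \<Rightarrow> real" where
  "edge_prob \<gamma> e = exp (- (real (elen e) powr \<gamma>))"

definition edge_law :: "real \<Rightarrow> int set set \<Rightarrow> (int set \<Rightarrow> bool) measure" where
  "edge_law \<gamma> P = PiM P (\<lambda>e. measure_pmf (bernoulli_pmf (edge_prob \<gamma> e)))"

text \<open>G_N (law P_{N,gamma}) and G (law P_gamma) as functions of the edge indicators.\<close>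
definition G_N :: "nat \<Rightarrow> (int set \<Rightarrow> bool) \<Rightarrow> igraph" where
  "G_N N \<omega> = ({1..int N}, nn_edges {1..int N} \<union> {e\<in>pairs_fin N. \<omega> e})"

definition G_Z :: "(int set \<Rightarrow> bool) \<Rightarrow> igraph" where
  "G_Z \<omega> = (UNIV, nn_edges UNIV \<union> {e\<in>pairs_Z. \<omega> e})"

definition P_N :: "nat \<Rightarrow> real \<Rightarrow> (int set \<Rightarrow> bool) measure" where
  "P_N N \<gamma> = edge_law \<gamma> (pairs_fin N)"

definition P_Z :: "real \<Rightarrow> (int set \<Rightarrow> bool) measure" where
  "P_Z \<gamma> = edge_law \<gamma> pairs_Z"

definition mu :: "real \<Rightarrow> nat \<Rightarrow> nat \<Rightarrow> igraph \<Rightarrow> int \<Rightarrow> real" where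
  "mu \<gamma> L k g r = measure (P_Z \<gamma>)
     {\<omega> \<in> space (P_Z \<gamma>). rooted_iso (trunc_ball L (G_Z \<omega>) 0 k) 0 g r}"

definition count_iso :: "nat \<Rightarrow> nat \<Rightarrow> nat \<Rightarrow> igraph \<Rightarrow> int \<Rightarrow> (int set \<Rightarrow> bool) \<Rightarrow> nat" where
  "count_iso N L k g r \<omega> =
     card {i\<in>{1..int N}. rooted_iso (trunc_ball L (G_N N \<omega>) i k) i g r}"

end

theory Submission
  imports Defs
begin

definition sh :: "int \<Rightarrow> int set \<Rightarrow> int set" where
  "sh c e = (\<lambda>x. c + x) ` e"

definition TE :: "nat \<Rightarrow> int set set \<Rightarrow> int set set" where
  "TE L E = {e\<in>E. elen e \<le> L}"

lemma elen_pair: "elen {x, y} = nat \<bar>x - y\<bar>"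
  unfolding elen_def by (simp add: max_def min_def abs_if)

lemma bv_bound:
  assumes "\<forall>e\<in>F. elen e \<le> L"
  shows "ball_verts F r j \<subseteq> {r - int j * int L .. r + int j * int L}"
proof (induction j)
  case 0 then show ?case by simp
next
  case (Suc j)
  show ?case
  proof
    fix y assume "y \<in> ball_verts F r (Suc j)"
    then consider "y \<in> ball_verts F r j" | x where "x \<in> ball_verts F r j" "{x, y} \<in> F" by auto
    then show "y \<in> {r - int (Suc j) * int L .. r + int (Suc j) * int L}"
    proof cases
      case 1 with Suc show ?thesis by (auto simp: algebra_simps)
    next
      case 2
      have "elen {x,y} \<le> L" using assms 2 by auto
      hence "\<bar>x - y\<bar> \<le> int L" by (simp add: elen_pair)
      moreover have "x \<in> {r - int j * int L .. r + int j * int L}" using Suc.IH 2 by blast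
      ultimately show ?thesis by (auto simp: algebra_simps abs_le_iff)
    qed
  qed
qed

lemma bv_eq:
  assumes F: "\<forall>e\<in>F. elen e \<le> L" and F': "\<forall>e\<in>F'. elen e \<le> L"
    and W: "\<And>e. e \<subseteq> {r - int k * int L .. r + int k * int L} \<Longrightarrow> (e \<in> F \<longleftrightarrow> e \<in> F')"
    and "j \<le> k"
  shows "ball_verts F r j = ball_verts F' r j"
  using \<open>j \<le> k\<close>
proof (induction j)
  case 0 then show ?case by simp
next
  case (Suc j)
  hence IH: "ball_verts F r j = ball_verts F' r j" by simp
  have key: "{x, y} \<in> F'" if "x \<in> ball_verts F r j" "{x, y} \<in> F"
     "\<forall>e\<in>F. elen e \<le> L" "\<And>e. e \<subseteq> {r - int k * int L .. r + int k * int L} \<Longrightarrow> (e \<in> F \<longleftrightarrow> e \<in> F')"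
     for x y F F'
  proof -
    have xb: "x \<in> {r - int j * int L .. r + int j * int L}" using bv_bound[OF that(3), of r j] that(1) by blast
    have "elen {x,y} \<le> L" using that by auto
    hence "\<bar>x - y\<bar> \<le> int L" by (simp add: elen_pair)
    moreover have "int (Suc j) * int L \<le> int k * int L" using Suc.prems by (intro mult_right_mono) auto
    ultimately have "{x,y} \<subseteq> {r - int k * int L .. r + int k * int L}" using xb by (auto simp: algebra_simps)
    with that show ?thesis by blast
  qed
  have "{y. \<exists>x\<in>ball_verts F r j. {x, y} \<in> F} = {y. \<exists>x\<in>ball_verts F' r j. {x, y} \<in> F'}"
  proof (intro set_eqI iffI)
    fix y assume "y \<in> {y. \<exists>x\<in>ball_verts F r j. {x, y} \<in> F}"
    then obtain x where "x \<in> ball_verts F r j" "{x,y} \<in> F" by auto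
    with key[OF this F W] IH show "y \<in> {y. \<exists>x\<in>ball_verts F' r j. {x, y} \<in> F'}" by auto
  next
    fix y assume "y \<in> {y. \<exists>x\<in>ball_verts F' r j. {x, y} \<in> F'}"
    then obtain x where "x \<in> ball_verts F' r j" "{x,y} \<in> F'" by auto
    with key[OF this F'] W IH show "y \<in> {y. \<exists>x\<in>ball_verts F r j. {x, y} \<in> F}" by auto
  qed
  with IH show ?case by simp
qed

lemma tb_local:
  assumes W: "\<And>e. e \<subseteq> {r - int k * int L .. r + int k * int L} \<Longrightarrow> (e \<in> TE L E \<longleftrightarrow> e \<in> TE L E')"
  shows "trunc_ball L (V, E) r k = trunc_ball L (V', E') r k"
proof -
  have F: "\<forall>e\<in>TE L E. elen e \<le> L" "\<forall>e\<in>TE L E'. elen e \<le> L" by (auto simp: TE_def)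
  have S: "ball_verts (TE L E) r k = ball_verts (TE L E') r k"
    by (rule bv_eq[OF F W]) auto
  have Sb: "ball_verts (TE L E) r k \<subseteq> {r - int k * int L .. r + int k * int L}"
    using bv_bound[OF F(1)] .
  have "{e \<in> TE L E. e \<subseteq> ball_verts (TE L E) r k} = {e \<in> TE L E'. e \<subseteq> ball_verts (TE L E') r k}"
    using S Sb W by blast
  then show ?thesis using S unfolding trunc_ball_def ball_def TE_def by (simp add: Let_def)
qed

lemma sh_inj: "sh c a = sh c b \<longleftrightarrow> a = b"
  unfolding sh_def by (rule inj_image_eq_iff) (auto intro: injI)

lemma sh_sh: "sh c (sh d e) = sh (c + d) e"
  unfolding sh_def image_image by (simp add: add.assoc)

lemma sh_0: "sh 0 e = e" unfolding sh_def by simp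

lemma sh_eq_iff: "sh c a = b \<longleftrightarrow> a = sh (-c) b"
  by (metis add.right_inverse add.left_inverse sh_0 sh_sh)

lemma sh_pair: "sh c {x, y} = {c + x, c + y}" unfolding sh_def by simp

lemma sh_subset: "sh c a \<subseteq> (\<lambda>x. c + x) ` S \<longleftrightarrow> a \<subseteq> S"
  unfolding sh_def by (auto simp: image_subset_iff)

lemma elen_sh:
  assumes "finite e" "e \<noteq> {}"
  shows "elen (sh c e) = elen e"
proof -
  have "Max (sh c e) = c + Max e"
    unfolding sh_def by (rule hom_Max_commute[symmetric]) (use assms in \<open>auto simp: max_def\<close>)
  moreover have "Min (sh c e) = c + Min e"
    unfolding sh_def by (rule hom_Min_commute[symmetric]) (use assms in \<open>auto simp: min_def\<close>)
  ultimately show ?thesis unfolding elen_def by simp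
qed

lemma bv_shift: "ball_verts (sh c ` F) (c + r) j = (\<lambda>x. c + x) ` ball_verts F r j"
proof (induction j)
  case 0 then show ?case by simp
next
  case (Suc j)
  have key: "{x', y} \<in> sh c ` F \<longleftrightarrow> {x' - c, y - c} \<in> F" for x' y
  proof -
    have "{x', y} \<in> sh c ` F \<longleftrightarrow> sh (-c) {x', y} \<in> F"
    proof
      assume "{x', y} \<in> sh c ` F"
      then obtain e where "e \<in> F" "{x', y} = sh c e" by auto
      then show "sh (-c) {x', y} \<in> F" by (simp add: sh_sh sh_0)
    next
      assume "sh (-c) {x', y} \<in> F"
      moreover have "sh c (sh (-c) {x', y}) = {x', y}" by (simp add: sh_sh sh_0)
      ultimately show "{x', y} \<in> sh c ` F" by (metis image_eqI)
    qed
    also have "sh (-c) {x', y} = {x' - c, y - c}" by (simp add: sh_pair)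
    finally show ?thesis by auto
  qed
  have "{y. \<exists>x\<in>(\<lambda>x. c + x) ` ball_verts F r j. {x, y} \<in> sh c ` F}
        = (\<lambda>x. c + x) ` {y. \<exists>x\<in>ball_verts F r j. {x, y} \<in> F}"
  proof (intro set_eqI iffI)
    fix y assume "y \<in> {y. \<exists>x\<in>(\<lambda>x. c + x) ` ball_verts F r j. {x, y} \<in> sh c ` F}"
    then obtain x where "x \<in> ball_verts F r j" "{c + x, y} \<in> sh c ` F" by auto
    then have "{x, y - c} \<in> F" using key by simp
    then show "y \<in> (\<lambda>x. c + x) ` {y. \<exists>x\<in>ball_verts F r j. {x, y} \<in> F}"
      using \<open>x \<in> ball_verts F r j\<close> by (auto intro!: image_eqI[of _ _ "y - c"])
  next
    fix y assume "y \<in> (\<lambda>x. c + x) ` {y. \<exists>x\<in>ball_verts F r j. {x, y} \<in> F}"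
    then obtain y0 x where "y = c + y0" "x \<in> ball_verts F r j" "{x, y0} \<in> F" by auto
    then show "y \<in> {y. \<exists>x\<in>(\<lambda>x. c + x) ` ball_verts F r j. {x, y} \<in> sh c ` F}"
      using key[of "c + x" "c + y0"] by auto
  qed
  then show ?case using Suc by (simp add: image_Un)
qed

lemma tb_shift:
  assumes "\<forall>e\<in>E. finite e \<and> e \<noteq> {}"
  shows "trunc_ball L (V', sh c ` E) (c + r) k =
    ((\<lambda>x. c + x) ` fst (trunc_ball L (V, E) r k), sh c ` snd (trunc_ball L (V, E) r k))"
proof -
  have T: "{e \<in> sh c ` E. elen e \<le> L} = sh c ` {e\<in>E. elen e \<le> L}"
    using assms by (auto simp: elen_sh)
  define F where "F = {e\<in>E. elen e \<le> L}"
  define S where "S = ball_verts F r k"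
  have B: "ball_verts (sh c ` F) (c + r) k = (\<lambda>x. c + x) ` S"
    unfolding S_def by (rule bv_shift)
  have Ed: "{e \<in> sh c ` F. e \<subseteq> (\<lambda>x. c + x) ` S} = sh c ` {e \<in> F. e \<subseteq> S}"
    using sh_subset[of c _ S] by blast
  show ?thesis
    unfolding trunc_ball_def ball_def Let_def using T B Ed
    by (simp add: F_def S_def)
qed

lemma iso_shift:
  "rooted_iso ((\<lambda>x. c + x) ` V, sh c ` E) c g r \<longleftrightarrow> rooted_iso (V, E) 0 g r"
  unfolding rooted_iso_def sh_def by (simp add: image_image)


definition wn :: "int \<Rightarrow> int \<Rightarrow> int set" where "wn R i = {i - R .. i + R}"
definition Wn :: "nat \<Rightarrow> int \<Rightarrow> int \<Rightarrow> int set set" where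
  "Wn N R i = {e\<in>pairs_fin N. e \<subseteq> wn R i}"
definition W0 :: "int \<Rightarrow> int set set" where "W0 R = {e\<in>pairs_Z. e \<subseteq> wn R 0}"
definition H :: "int \<Rightarrow> (int set \<Rightarrow> bool) \<Rightarrow> igraph" where
  "H R \<phi> = (UNIV, nn_edges UNIV \<union> {e\<in>W0 R. \<phi> e})"

lemma tb_local':
  assumes "\<And>e. e \<subseteq> wn (int k * int L) r \<Longrightarrow> (e \<in> E \<longleftrightarrow> e \<in> E')"
  shows "trunc_ball L (V, E) r k = trunc_ball L (V', E') r k"
  by (rule tb_local) (use assms in \<open>auto simp: TE_def wn_def\<close>)

lemma nn_UNIV_sh: "sh c ` nn_edges UNIV = nn_edges UNIV"
proof (intro set_eqI iffI)
  fix e assume "e \<in> sh c ` nn_edges UNIV"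
  then obtain x where "e = sh c {x, x+1}" unfolding nn_edges_def by auto
  then have "e = {c + x, (c + x) + 1}" by (simp add: sh_pair add.assoc)
  then show "e \<in> nn_edges UNIV" unfolding nn_edges_def by blast
next
  fix e assume "e \<in> nn_edges UNIV"
  then obtain x where x: "e = {x, x+1}" unfolding nn_edges_def by auto
  have "sh c {x - c, (x - c) + 1} = e" by (simp add: sh_pair x)
  moreover have "{x - c, (x - c) + 1} \<in> nn_edges UNIV" unfolding nn_edges_def by blast
  ultimately show "e \<in> sh c ` nn_edges UNIV" by blast
qed

lemma nn_win: "e \<subseteq> V \<Longrightarrow> (e \<in> nn_edges V \<longleftrightarrow> e \<in> nn_edges UNIV)"
  unfolding nn_edges_def by auto

lemma pf_win:
  assumes "R + 1 \<le> i" "i + R \<le> int N" "e \<subseteq> wn R i"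
  shows "e \<in> pairs_fin N \<longleftrightarrow> e \<in> sh i ` W0 R"
proof
  assume "e \<in> pairs_fin N"
  then obtain x y where e: "e = {x, y}" "1 \<le> x" "x + 2 \<le> y" "y \<le> int N" unfolding pairs_fin_def by auto
  have "{x - i, y - i} \<in> pairs_Z" unfolding pairs_Z_def using e(3) by force
  moreover have "{x - i, y - i} \<subseteq> wn R 0" using e assms(3) unfolding wn_def by auto
  ultimately have "{x - i, y - i} \<in> W0 R" unfolding W0_def by blast
  moreover have "sh i {x - i, y - i} = e" by (simp add: sh_pair e)
  ultimately show "e \<in> sh i ` W0 R" by blast
next
  assume "e \<in> sh i ` W0 R"
  then obtain x y where e: "e = sh i {x, y}" "x + 2 \<le> y" "{x,y} \<subseteq> wn R 0"
    unfolding W0_def pairs_Z_def by auto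
  then have e2: "e = {i + x, i + y}" by (simp add: sh_pair)
  have "- R \<le> x" "y \<le> R" using e(3) unfolding wn_def by auto
  then have "1 \<le> i + x" "i + y \<le> int N" "(i + x) + 2 \<le> i + y" using assms(1,2) e(2) by linarith+
  then show "e \<in> pairs_fin N" unfolding pairs_fin_def e2 by blast
qed

lemma H_edges_ok: "\<forall>e\<in>snd (H R \<phi>). finite e \<and> e \<noteq> {}"
  unfolding H_def nn_edges_def W0_def pairs_Z_def by auto

lemma tb_Z:
  "trunc_ball L (G_Z \<omega>) 0 k = trunc_ball L (H (int k * int L) (restrict \<omega> (W0 (int k * int L)))) 0 k"
  unfolding G_Z_def H_def
proof (rule tb_local')
  fix e assume ew: "e \<subseteq> wn (int k * int L) 0"
  have "e \<in> pairs_Z \<longleftrightarrow> e \<in> W0 (int k * int L)" using ew unfolding W0_def by blast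
  then show "e \<in> nn_edges UNIV \<union> {e \<in> pairs_Z. \<omega> e} \<longleftrightarrow>
    e \<in> nn_edges UNIV \<union> {e \<in> W0 (int k * int L). restrict \<omega> (W0 (int k * int L)) e}"
    by simp
qed

lemma tb_N_local:
  "trunc_ball L (G_N N \<omega>) i k = trunc_ball L (G_N N (restrict \<omega> (Wn N (int k * int L) i))) i k"
  unfolding G_N_def by (rule tb_local') (auto simp: Wn_def)

lemma tb_N_shift:
  assumes "int k * int L + 1 \<le> i" "i + int k * int L \<le> int N"
  shows "trunc_ball L (G_N N \<omega>) i k =
    ((\<lambda>x. i + x) ` fst (trunc_ball L (H (int k * int L) (restrict (\<lambda>e. \<omega> (sh i e)) (W0 (int k * int L)))) 0 k),
     sh i ` snd (trunc_ball L (H (int k * int L) (restrict (\<lambda>e. \<omega> (sh i e)) (W0 (int k * int L)))) 0 k))"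
proof -
  define R where "R = int k * int L"
  define \<phi> where "\<phi> = restrict (\<lambda>e. \<omega> (sh i e)) (W0 R)"
  note A0 = tb_shift[OF H_edges_ok[of R \<phi>], where L=L and V'=UNIV and c=i and r=0 and V="fst (H R \<phi>)" and k=k]
  have A: "trunc_ball L (UNIV, sh i ` snd (H R \<phi>)) i k =
    ((\<lambda>x. i + x) ` fst (trunc_ball L (H R \<phi>) 0 k), sh i ` snd (trunc_ball L (H R \<phi>) 0 k))"
    using A0 by (simp only: prod.collapse add_0_right)
  have B: "trunc_ball L (G_N N \<omega>) i k = trunc_ball L (UNIV, sh i ` snd (H R \<phi>)) i k"
    unfolding G_N_def
  proof (rule tb_local')
    fix e assume ew: "e \<subseteq> wn (int k * int L) i"
    have sub: "wn R i \<subseteq> {1..int N}" using assms unfolding wn_def R_def by auto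
    have "sh i ` snd (H R \<phi>) = nn_edges UNIV \<union> sh i ` {e\<in>W0 R. \<phi> e}"
      unfolding H_def by (simp add: image_Un nn_UNIV_sh)
    also have "sh i ` {e\<in>W0 R. \<phi> e} = {e \<in> sh i ` W0 R. \<omega> e}"
      unfolding \<phi>_def by auto
    finally have eq: "sh i ` snd (H R \<phi>) = nn_edges UNIV \<union> {e \<in> sh i ` W0 R. \<omega> e}" .
    have "e \<in> nn_edges {1..int N} \<longleftrightarrow> e \<in> nn_edges UNIV"
      using ew sub R_def by (intro nn_win) auto
    moreover have "e \<in> pairs_fin N \<longleftrightarrow> e \<in> sh i ` W0 R"
      using ew assms by (intro pf_win) (auto simp: R_def)
    ultimately show "e \<in> nn_edges {1..int N} \<union> {e \<in> pairs_fin N. \<omega> e} \<longleftrightarrow>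
         e \<in> sh i ` snd (H R \<phi>)"
      by (simp add: eq)
  qed
  show ?thesis using B A by (simp only: R_def \<phi>_def)
qed

lemma iso_N:
  assumes "int k * int L + 1 \<le> i" "i + int k * int L \<le> int N"
  shows "rooted_iso (trunc_ball L (G_N N \<omega>) i k) i g r \<longleftrightarrow>
    rooted_iso (trunc_ball L (H (int k * int L) (restrict (\<lambda>e. \<omega> (sh i e)) (W0 (int k * int L)))) 0 k) 0 g r"
proof -
  obtain T where T: "T = trunc_ball L (H (int k * int L) (restrict (\<lambda>e. \<omega> (sh i e)) (W0 (int k * int L)))) 0 k" by blast
  have e: "trunc_ball L (G_N N \<omega>) i k = ((\<lambda>x. i + x) ` fst T, sh i ` snd T)"
    unfolding T by (rule tb_N_shift[OF assms])
  have "rooted_iso ((\<lambda>x. i + x) ` fst T, sh i ` snd T) i g r \<longleftrightarrow> rooted_iso (fst T, snd T) 0 g r"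
    by (rule iso_shift)
  then have "rooted_iso (trunc_ball L (G_N N \<omega>) i k) i g r \<longleftrightarrow> rooted_iso T 0 g r"
    unfolding e by (simp only: prod.collapse)
  then show ?thesis unfolding T .
qed


abbreviation Mb :: "real \<Rightarrow> int set \<Rightarrow> bool measure" where
  "Mb \<gamma> \<equiv> (\<lambda>e. measure_pmf (bernoulli_pmf (edge_prob \<gamma> e)))"

lemma space_Mb: "space (PiM W (Mb \<gamma>)) = PiE W (\<lambda>_. UNIV)"
  by (simp add: space_PiM)

lemma sets_fin:
  assumes "finite W"
  shows "sets (PiM W (Mb \<gamma>)) = Pow (space (PiM W (Mb \<gamma>)))"
proof -
  have "sets (PiM W (Mb \<gamma>)) = sets (PiM W (\<lambda>_. count_space (UNIV::bool set)))"
    by (intro sets_PiM_cong) auto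
  also have "PiM W (\<lambda>_. count_space (UNIV::bool set)) = count_space (PiE W (\<lambda>_. UNIV))"
    by (rule count_space_PiM_finite[OF assms]) auto
  finally show ?thesis by (simp add: space_Mb)
qed

lemma meas_fin:
  assumes "finite W" "f \<in> space (PiM W (Mb \<gamma>)) \<rightarrow> space N"
  shows "f \<in> measurable (PiM W (Mb \<gamma>)) N"
proof -
  have "f \<in> measurable (count_space (space (PiM W (Mb \<gamma>)))) N"
    using assms(2) by (simp add: measurable_count_space_eq1)
  moreover have "sets (count_space (space (PiM W (Mb \<gamma>)))) = sets (PiM W (Mb \<gamma>))"
    using sets_fin[OF assms(1)] by simp
  ultimately show ?thesis using measurable_cong_sets by blast
qed

lemma finite_pairs_fin: "finite (pairs_fin N)"
proof -
  have "pairs_fin N \<subseteq> Pow {1..int N}" unfolding pairs_fin_def by auto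
  then show ?thesis by (rule finite_subset) auto
qed

lemma finite_W0: "finite (W0 R)"
proof -
  have "W0 R \<subseteq> Pow (wn R 0)" unfolding W0_def by auto
  then show ?thesis by (rule finite_subset) (auto simp: wn_def)
qed

lemma finite_Wn: "finite (Wn N R i)"
  using finite_pairs_fin by (rule rev_finite_subset) (auto simp: Wn_def)

lemma P_N_eq: "P_N N \<gamma> = PiM (pairs_fin N) (Mb \<gamma>)"
  unfolding P_N_def edge_law_def ..

lemma P_Z_eq: "P_Z \<gamma> = PiM pairs_Z (Mb \<gamma>)"
  unfolding P_Z_def edge_law_def ..

lemma prob_PiM: "prob_space (PiM W (Mb \<gamma>))"
  by (rule prob_space_PiM) (rule measure_pmf.prob_space_axioms)

definition Phi :: "nat \<Rightarrow> nat \<Rightarrow> igraph \<Rightarrow> int \<Rightarrow> (int set \<Rightarrow> bool) \<Rightarrow> bool" where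
  "Phi L k g r \<phi> = rooted_iso (trunc_ball L (H (int k * int L) \<phi>) 0 k) 0 g r"

lemma mu_eq:
  "mu \<gamma> L k g r = measure (PiM (W0 (int k * int L)) (Mb \<gamma>))
      {\<phi> \<in> space (PiM (W0 (int k * int L)) (Mb \<gamma>)). Phi L k g r \<phi>}"
proof -
  define W where "W = W0 (int k * int L)"
  define A where "A = {\<phi> \<in> space (PiM W (Mb \<gamma>)). Phi L k g r \<phi>}"
  have WZ: "W \<subseteq> pairs_Z" unfolding W_def W0_def by auto
  have d: "distr (PiM pairs_Z (Mb \<gamma>)) (PiM W (\<lambda>i. Mb \<gamma> (id i))) (\<lambda>\<omega>. \<lambda>n\<in>W. \<omega> (id n))
      = PiM W (\<lambda>i. Mb \<gamma> (id i))"
    by (rule distr_PiM_reindex) (use WZ in \<open>auto intro: measure_pmf.prob_space_axioms\<close>)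
  have d': "distr (PiM pairs_Z (Mb \<gamma>)) (PiM W (Mb \<gamma>)) (\<lambda>\<omega>. restrict \<omega> W) = PiM W (Mb \<gamma>)"
    using d by simp
  have m: "(\<lambda>\<omega>. restrict \<omega> W) \<in> measurable (PiM pairs_Z (Mb \<gamma>)) (PiM W (Mb \<gamma>))"
    using WZ by (rule measurable_restrict_subset)
  have As: "A \<in> sets (PiM W (Mb \<gamma>))"
    using sets_fin[OF finite_W0, of _ \<gamma>] unfolding A_def W_def by auto
  have "measure (PiM W (Mb \<gamma>)) A = measure (PiM pairs_Z (Mb \<gamma>)) ((\<lambda>\<omega>. restrict \<omega> W) -` A \<inter> space (PiM pairs_Z (Mb \<gamma>)))"
    by (subst d'[symmetric]) (rule measure_distr[OF m As])
  also have "(\<lambda>\<omega>. restrict \<omega> W) -` A \<inter> space (PiM pairs_Z (Mb \<gamma>)) =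
     {\<omega> \<in> space (P_Z \<gamma>). rooted_iso (trunc_ball L (G_Z \<omega>) 0 k) 0 g r}"
    using measurable_space[OF m] unfolding A_def Phi_def P_Z_eq W_def by (auto simp: tb_Z)
  finally show ?thesis unfolding mu_def A_def W_def P_Z_eq by simp
qed


definition Q :: "nat \<Rightarrow> nat \<Rightarrow> nat \<Rightarrow> igraph \<Rightarrow> int \<Rightarrow> int \<Rightarrow> (int set \<Rightarrow> bool) \<Rightarrow> bool" where
  "Q N L k g r i \<omega> = rooted_iso (trunc_ball L (G_N N \<omega>) i k) i g r"

lemma elen_W0: "e \<in> W0 R \<Longrightarrow> elen (sh i e) = elen e"
  by (rule elen_sh) (auto simp: W0_def pairs_Z_def)

lemma interior_prob:
  assumes "int k * int L + 1 \<le> i" "i + int k * int L \<le> int N"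
  shows "measure (P_N N \<gamma>) {\<omega> \<in> space (P_N N \<gamma>). Q N L k g r i \<omega>} = mu \<gamma> L k g r"
proof -
  define W where "W = W0 (int k * int L)"
  define A where "A = {\<phi> \<in> space (PiM W (Mb \<gamma>)). Phi L k g r \<phi>}"
  define T where "T = (\<lambda>\<omega>::int set \<Rightarrow> bool. \<lambda>n\<in>W. \<omega> (sh i n))"
  have WN: "sh i \<in> W \<rightarrow> pairs_fin N"
  proof
    fix e assume e: "e \<in> W"
    have "sh i e \<subseteq> wn (int k * int L) i" using e unfolding W_def W0_def wn_def sh_def by auto
    then have "sh i e \<in> pairs_fin N \<longleftrightarrow> sh i e \<in> sh i ` W0 (int k * int L)"
      by (intro pf_win assms)
    then show "sh i e \<in> pairs_fin N" using e W_def by auto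
  qed
  have inj: "inj_on (sh i) W" by (auto intro: inj_onI simp: sh_inj)
  have d: "distr (PiM (pairs_fin N) (Mb \<gamma>)) (PiM W (\<lambda>n. Mb \<gamma> (sh i n))) T = PiM W (\<lambda>n. Mb \<gamma> (sh i n))"
    unfolding T_def by (rule distr_PiM_reindex) (use WN inj in \<open>auto intro: measure_pmf.prob_space_axioms\<close>)
  have pc: "PiM W (\<lambda>n. Mb \<gamma> (sh i n)) = PiM W (Mb \<gamma>)"
    by (rule PiM_cong) (auto simp: edge_prob_def elen_W0 W_def)
  have d': "distr (PiM (pairs_fin N) (Mb \<gamma>)) (PiM W (Mb \<gamma>)) T = PiM W (Mb \<gamma>)"
    using d pc by simp
  have m: "T \<in> measurable (PiM (pairs_fin N) (Mb \<gamma>)) (PiM W (Mb \<gamma>))"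
    by (rule meas_fin[OF finite_pairs_fin]) (auto simp: T_def space_Mb)
  have As: "A \<in> sets (PiM W (Mb \<gamma>))"
    using sets_fin[OF finite_W0, of _ \<gamma>] unfolding A_def W_def by auto
  have "measure (PiM W (Mb \<gamma>)) A = measure (PiM (pairs_fin N) (Mb \<gamma>)) (T -` A \<inter> space (PiM (pairs_fin N) (Mb \<gamma>)))"
    by (subst d'[symmetric]) (rule measure_distr[OF m As])
  also have "T -` A \<inter> space (PiM (pairs_fin N) (Mb \<gamma>)) = {\<omega> \<in> space (P_N N \<gamma>). Q N L k g r i \<omega>}"
    using measurable_space[OF m] unfolding A_def Phi_def P_N_eq W_def T_def Q_def
    by (auto simp: iso_N[OF assms])
  finally show ?thesis using mu_eq[of \<gamma> L k g r] unfolding A_def W_def P_N_eq by simp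
qed

lemma coord_indep:
  assumes "pairs_fin N \<noteq> {}"
  shows "prob_space.indep_vars (P_N N \<gamma>) (Mb \<gamma>) (\<lambda>e \<omega>. \<omega> e) (pairs_fin N)"
proof -
  interpret prob_space "P_N N \<gamma>" unfolding P_N_eq by (rule prob_PiM)
  show ?thesis
  proof (subst indep_vars_iff_distr_eq_PiM'[OF assms])
    show "random_variable (Mb \<gamma> i) (\<lambda>\<omega>. \<omega> i)" if "i \<in> pairs_fin N" for i
      unfolding P_N_eq using that by (rule measurable_component_singleton)
    have "distr (P_N N \<gamma>) (PiM (pairs_fin N) (Mb \<gamma>)) (\<lambda>x. restrict x (pairs_fin N))
        = distr (P_N N \<gamma>) (PiM (pairs_fin N) (Mb \<gamma>)) (\<lambda>x. x)"
      by (rule distr_cong) (auto simp: P_N_eq space_PiM)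
    also have "\<dots> = P_N N \<gamma>" unfolding P_N_eq by (rule distr_id)
    also have "\<dots> = PiM (pairs_fin N) (\<lambda>i. distr (P_N N \<gamma>) (Mb \<gamma> i) (\<lambda>\<omega>. \<omega> i))"
      unfolding P_N_eq
      by (rule PiM_cong[OF refl], rule distr_PiM_component[symmetric]) (auto intro: measure_pmf.prob_space_axioms)
    finally show "distr (P_N N \<gamma>) (PiM (pairs_fin N) (Mb \<gamma>)) (\<lambda>x. \<lambda>i\<in>pairs_fin N. x i)
        = PiM (pairs_fin N) (\<lambda>i. distr (P_N N \<gamma>) (Mb \<gamma> i) (\<lambda>\<omega>. \<omega> i))" .
  qed
qed


lemma arith_final:
  fixes \<epsilon> R N q :: real
  assumes e: "\<epsilon> > 0" and R: "R \<ge> 1" and N: "N > 0" and N1: "N \<ge> 8 * R / \<epsilon>"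
    and N2: "N > 8 * (2*R+1)^2 / (5 * \<epsilon>^2) + 2 * (2*R+1)"
    and q: "q \<ge> N / (2*R+1) - 1" "q \<ge> 0"
  shows "(2*R+1) * exp (-2 * (\<epsilon> - 2*R/N)^2 * q) < exp (- (\<epsilon>^2 * N / (8*R+2)))"
proof -
  define m where "m = 2*R+1"
  have m: "m \<ge> 3" using R m_def by simp
  have "\<epsilon> * N \<ge> 8 * R" using N1 e by (simp add: divide_le_eq mult.commute)
  then have "2*R/N \<le> \<epsilon>/4" using N by (simp add: divide_le_eq)
  then have eta: "\<epsilon> - 2*R/N \<ge> 3*\<epsilon>/4" by simp
  have eta2: "(\<epsilon> - 2*R/N)^2 \<ge> (3*\<epsilon>/4)^2"
    by (rule power_mono[OF eta]) (use e in simp)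
  have a1: "2 * (\<epsilon> - 2*R/N)^2 * q \<ge> 2 * (3*\<epsilon>/4)^2 * q"
    using eta2 q(2) by (intro mult_right_mono) auto
  have a2: "2 * (3*\<epsilon>/4)^2 * q \<ge> 2 * (3*\<epsilon>/4)^2 * (N/m - 1)"
    using q(1) m_def by (intro mult_left_mono) auto
  have a: "2 * (\<epsilon> - 2*R/N)^2 * q \<ge> (9/8) * \<epsilon>^2 * (N/m) - (9/8) * \<epsilon>^2"
  proof -
    have "2 * (3*\<epsilon>/4)^2 * (N/m - 1) = (9/8) * \<epsilon>^2 * (N/m) - (9/8) * \<epsilon>^2"
      by (simp add: power2_eq_square field_simps)
    then show ?thesis using a1 a2 by linarith
  qed
  have b: "\<epsilon>^2 * N / (8*R+2) \<le> \<epsilon>^2 * N / (2*m)"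
    using e N R m_def by (intro divide_left_mono) auto
  have c: "ln m < m" using m by (intro ln_less_self) auto
  have N2': "N > 8 * m^2 / (5 * \<epsilon>^2) + 2 * m" using N2 m_def by simp
  have "(5/8) * \<epsilon>^2 * N / m > (5/8) * \<epsilon>^2 * (8 * m^2 / (5 * \<epsilon>^2) + 2 * m) / m"
    using N2' e m by (intro divide_strict_right_mono mult_strict_left_mono) auto
  also have "(5/8) * \<epsilon>^2 * (8 * m^2 / (5 * \<epsilon>^2) + 2 * m) / m = m + (5/4) * \<epsilon>^2"
    using e m by (simp add: field_simps power2_eq_square)
  finally have d0: "m + (5/4) * \<epsilon>^2 < (5/8) * \<epsilon>^2 * N / m" .
  have "(9/8) * \<epsilon>^2 \<le> (5/4) * \<epsilon>^2" by simp
  with d0 have d: "m + (9/8) * \<epsilon>^2 < (5/8) * \<epsilon>^2 * N / m" by linarith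
  have "ln m - 2 * (\<epsilon> - 2*R/N)^2 * q < - (\<epsilon>^2 * N / (2*m))"
  proof -
    have "ln m - 2 * (\<epsilon> - 2*R/N)^2 * q \<le> ln m - (9/8) * \<epsilon>^2 * (N/m) + (9/8) * \<epsilon>^2"
      using a by simp
    also have "\<dots> < (5/8) * \<epsilon>^2 * N / m - (9/8) * \<epsilon>^2 * (N/m)"
      using c d by linarith
    also have "\<dots> = - (\<epsilon>^2 * N / (2*m))"
      using m by (simp add: field_simps)
    finally show ?thesis .
  qed
  also have "\<dots> \<le> - (\<epsilon>^2 * N / (8*R+2))" using b by simp
  finally have f: "ln m + (-2 * (\<epsilon> - 2*R/N)^2 * q) < - (\<epsilon>^2 * N / (8*R+2))" by simp
  have "m * exp (-2 * (\<epsilon> - 2*R/N)^2 * q) = exp (ln m + (-2 * (\<epsilon> - 2*R/N)^2 * q))"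
    using m by (simp only: exp_add exp_ln)
  also have "\<dots> < exp (- (\<epsilon>^2 * N / (8*R+2)))" using f by simp
  finally show ?thesis unfolding m_def .
qed


definition Xv :: "nat \<Rightarrow> nat \<Rightarrow> nat \<Rightarrow> igraph \<Rightarrow> int \<Rightarrow> int \<Rightarrow> (int set \<Rightarrow> bool) \<Rightarrow> real" where
  "Xv N L k g r i \<omega> = (if Q N L k g r i (restrict \<omega> (Wn N (int k * int L) i)) then 1 else 0)"

lemma Xv_eq: "Xv N L k g r i \<omega> = (if Q N L k g r i \<omega> then 1 else 0)"
  unfolding Xv_def Q_def using tb_N_local[of L N \<omega> i k] by simp

lemma disj_Wn:
  assumes "\<And>i j. i \<in> C \<Longrightarrow> j \<in> C \<Longrightarrow> i \<noteq> j \<Longrightarrow> 2 * R + 1 \<le> \<bar>i - j\<bar>"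
  shows "disjoint_family_on (Wn N R) C"
  unfolding disjoint_family_on_def
proof (intro ballI impI)
  fix i j assume ij: "i \<in> C" "j \<in> C" "i \<noteq> j"
  show "Wn N R i \<inter> Wn N R j = {}"
  proof (rule ccontr)
    assume "Wn N R i \<inter> Wn N R j \<noteq> {}"
    then obtain e where e: "e \<in> pairs_fin N" "e \<subseteq> wn R i" "e \<subseteq> wn R j" unfolding Wn_def by auto
    then obtain x where "x \<in> e" unfolding pairs_fin_def by auto
    with e have "i - R \<le> x" "x \<le> i + R" "j - R \<le> x" "x \<le> j + R" unfolding wn_def by auto
    then have "\<bar>i - j\<bar> \<le> 2 * R" by (simp add: abs_le_iff)
    with assms[OF ij] show False by simp
  qed
qed

lemma indep_class:
  assumes ne: "pairs_fin N \<noteq> {}"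
    and sep: "\<And>i j. i \<in> C \<Longrightarrow> j \<in> C \<Longrightarrow> i \<noteq> j \<Longrightarrow> 2 * (int k * int L) + 1 \<le> \<bar>i - j\<bar>"
  shows "prob_space.indep_vars (P_N N \<gamma>) (\<lambda>_. borel) (\<lambda>i. Xv N L k g r i) C"
proof -
  interpret prob_space "P_N N \<gamma>" unfolding P_N_eq by (rule prob_PiM)
  have ci: "indep_vars (Mb \<gamma>) (\<lambda>e \<omega>. \<omega> e) (pairs_fin N)" by (rule coord_indep[OF ne])
  have r: "indep_vars (\<lambda>j. PiM (Wn N (int k * int L) j) (Mb \<gamma>))
      (\<lambda>j \<omega>. restrict (\<lambda>e. \<omega> e) (Wn N (int k * int L) j)) C"
  proof (rule indep_vars_restrict[OF ci])
    show "Wn N (int k * int L) j \<subseteq> pairs_fin N" if "j \<in> C" for j by (auto simp: Wn_def)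
    show "disjoint_family_on (Wn N (int k * int L)) C" by (rule disj_Wn) (rule sep)
  qed
  have "indep_vars (\<lambda>_. borel)
      (\<lambda>j \<omega>. (\<lambda>j \<psi>. if Q N L k g r j \<psi> then 1 else (0::real)) j (restrict (\<lambda>e. \<omega> e) (Wn N (int k * int L) j))) C"
    by (rule indep_vars_compose2[OF r]) (rule meas_fin[OF finite_Wn], simp)
  then show ?thesis unfolding Xv_def by simp
qed

lemma class_hoeff:
  assumes ne: "pairs_fin N \<noteq> {}" and fin: "finite C" "C \<noteq> {}"
    and sep: "\<And>i j. i \<in> C \<Longrightarrow> j \<in> C \<Longrightarrow> i \<noteq> j \<Longrightarrow> 2 * (int k * int L) + 1 \<le> \<bar>i - j\<bar>"
    and eta: "(\<eta>::real) \<ge> 0"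
  shows "measure (P_N N \<gamma>) {\<omega> \<in> space (P_N N \<gamma>). \<eta> * card C \<le>
      \<bar>(\<Sum>i\<in>C. Xv N L k g r i \<omega>) - (\<Sum>i\<in>C. integral\<^sup>L (P_N N \<gamma>) (Xv N L k g r i))\<bar>}
    \<le> 2 * exp (- 2 * \<eta>^2 * card C)"
proof -
  have ps: "prob_space (P_N N \<gamma>)" unfolding P_N_eq by (rule prob_PiM)
  have H: "Hoeffding_ineq (P_N N \<gamma>) C (\<lambda>i. Xv N L k g r i) (\<lambda>_. 0) (\<lambda>_. 1)"
    unfolding Hoeffding_ineq_def indep_interval_bounded_random_variables_def
      indep_interval_bounded_random_variables_axioms_def
    using ps fin indep_class[OF ne sep] by (auto simp: Xv_def)
  have cpos: "0 < real (card C)" using fin by (simp add: card_gt_0_iff)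
  have "measure (P_N N \<gamma>) {\<omega> \<in> space (P_N N \<gamma>). \<eta> * card C \<le>
      \<bar>(\<Sum>i\<in>C. Xv N L k g r i \<omega>) - (\<Sum>i\<in>C. integral\<^sup>L (P_N N \<gamma>) (Xv N L k g r i))\<bar>}
    \<le> 2 * exp (- 2 * (\<eta> * card C)^2 / (\<Sum>i\<in>C. (1 - 0)^2))"
    by (rule Hoeffding_ineq.Hoeffding_ineq_abs_ge[OF H]) (use eta cpos in auto)
  also have "- 2 * (\<eta> * card C)^2 / (\<Sum>i\<in>C. (1 - 0)^2) = - 2 * \<eta>^2 * card C"
    using cpos by (simp add: power2_eq_square)
  finally show ?thesis .
qed


lemma count_sum:
  "real (count_iso N L k g r \<omega>) = (\<Sum>i\<in>{1..int N}. Xv N L k g r i \<omega>)"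
proof -
  have "real (count_iso N L k g r \<omega>) = (\<Sum>i\<in>{i\<in>{1..int N}. Q N L k g r i \<omega>}. 1)"
    unfolding count_iso_def Q_def by simp
  also have "\<dots> = (\<Sum>i\<in>{1..int N}. if Q N L k g r i \<omega> then 1 else 0)"
    by (rule sum.inter_filter) simp
  finally show ?thesis by (simp add: Xv_eq)
qed

lemma exp_Xv:
  "integral\<^sup>L (P_N N \<gamma>) (Xv N L k g r i) = measure (P_N N \<gamma>) {\<omega> \<in> space (P_N N \<gamma>). Q N L k g r i \<omega>}"
proof -
  interpret prob_space "P_N N \<gamma>" unfolding P_N_eq by (rule prob_PiM)
  define A where "A = {\<omega> \<in> space (P_N N \<gamma>). Q N L k g r i \<omega>}"
  have As: "A \<in> sets (P_N N \<gamma>)"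
    unfolding P_N_eq A_def using sets_fin[OF finite_pairs_fin, of N \<gamma>] by (auto simp: P_N_eq)
  have "integral\<^sup>L (P_N N \<gamma>) (Xv N L k g r i) = integral\<^sup>L (P_N N \<gamma>) (indicator A)"
    by (rule Bochner_Integration.integral_cong) (auto simp: Xv_eq A_def indicator_def)
  also have "\<dots> = measure (P_N N \<gamma>) A"
  proof -
    have "A \<inter> space (P_N N \<gamma>) = A" unfolding A_def by auto
    then show ?thesis by (simp add: Bochner_Integration.integral_indicator)
  qed
  finally show ?thesis unfolding A_def .
qed

lemma exp_Xv_bounds:
  "0 \<le> integral\<^sup>L (P_N N \<gamma>) (Xv N L k g r i) \<and> integral\<^sup>L (P_N N \<gamma>) (Xv N L k g r i) \<le> 1"
proof -
  interpret prob_space "P_N N \<gamma>" unfolding P_N_eq by (rule prob_PiM)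
  show ?thesis unfolding exp_Xv by simp
qed

lemma boundary:
  fixes R :: int
  assumes R: "R = int k * int L"
  shows "\<bar>(\<Sum>i\<in>{1..int N}. integral\<^sup>L (P_N N \<gamma>) (Xv N L k g r i)) - real N * mu \<gamma> L k g r\<bar> \<le> 2 * real_of_int R"
proof -
  define S where "S = {1..int N}"
  define I where "I = {i\<in>S. R + 1 \<le> i \<and> i + R \<le> int N}"
  define f where "f = (\<lambda>i. integral\<^sup>L (P_N N \<gamma>) (Xv N L k g r i) - mu \<gamma> L k g r)"
  have R0: "R \<ge> 0" using R by simp
  have fin: "finite S" unfolding S_def by simp
  have mu01: "0 \<le> mu \<gamma> L k g r" "mu \<gamma> L k g r \<le> 1"
  proof -
    interpret prob_space "P_Z \<gamma>" unfolding P_Z_eq by (rule prob_PiM)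
    show "0 \<le> mu \<gamma> L k g r" "mu \<gamma> L k g r \<le> 1" unfolding mu_def by simp_all
  qed
  have fI: "f i = 0" if "i \<in> I" for i
    using that unfolding f_def I_def exp_Xv R
    by (subst interior_prob) auto
  have fb: "\<bar>f i\<bar> \<le> 1" for i
    using exp_Xv_bounds[of N \<gamma> L k g r i] mu01 unfolding f_def by auto
  have "(\<Sum>i\<in>S. integral\<^sup>L (P_N N \<gamma>) (Xv N L k g r i)) - real N * mu \<gamma> L k g r = (\<Sum>i\<in>S. f i)"
    unfolding f_def S_def by (simp add: sum_subtractf)
  also have "(\<Sum>i\<in>S. f i) = (\<Sum>i\<in>S - I. f i) + (\<Sum>i\<in>I. f i)"
    by (rule sum.subset_diff) (auto simp: I_def fin)
  also have "(\<Sum>i\<in>I. f i) = 0" using fI by simp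
  finally have eq: "(\<Sum>i\<in>S. integral\<^sup>L (P_N N \<gamma>) (Xv N L k g r i)) - real N * mu \<gamma> L k g r = (\<Sum>i\<in>S - I. f i)"
    by simp
  have "\<bar>\<Sum>i\<in>S - I. f i\<bar> \<le> (\<Sum>i\<in>S - I. \<bar>f i\<bar>)" by (rule sum_abs)
  also have "\<dots> \<le> (\<Sum>i\<in>S - I. 1)" by (rule sum_mono) (rule fb)
  also have "\<dots> = real (card (S - I))" by simp
  also have "card (S - I) \<le> card ({1..R} \<union> {int N - R + 1..int N})"
    by (rule card_mono) (auto simp: S_def I_def)
  also have "\<dots> \<le> card {1..R} + card {int N - R + 1..int N}" by (rule card_Un_le)
  also have "\<dots> = nat R + nat R" by simp
  finally have "\<bar>\<Sum>i\<in>S - I. f i\<bar> \<le> real (nat R + nat R)" by simp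
  then show ?thesis using eq R0 unfolding S_def by simp
qed


lemma cls_sep:
  assumes "m > 0" "nat ((i - 1) mod int m) = nat ((j - 1) mod int m)" "i \<noteq> j"
  shows "int m \<le> \<bar>i - j\<bar>"
proof -
  have "0 \<le> (i - 1) mod int m" "0 \<le> (j - 1) mod int m" using assms(1) by simp_all
  then have "(i - 1) mod int m = (j - 1) mod int m" using assms(2) by (simp add: eq_nat_nat_iff)
  then have "int m dvd (i - 1) - (j - 1)" by (simp add: mod_eq_dvd_iff)
  then have "int m dvd i - j" by simp
  then have "\<bar>int m\<bar> \<le> \<bar>i - j\<bar>" using assms(3) by (intro dvd_imp_le_int) auto
  then show ?thesis by simp
qed

lemma cls_card:
  assumes "m > 0" "c < m"
  shows "N div m \<le> card {i\<in>{1..int N}. nat ((i - 1) mod int m) = c}"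
proof -
  define f where "f = (\<lambda>j::nat. 1 + int c + int m * int j)"
  have inj: "inj_on f {..<N div m}" unfolding f_def using assms(1) by (auto intro: inj_onI)
  have sub: "f ` {..<N div m} \<subseteq> {i\<in>{1..int N}. nat ((i - 1) mod int m) = c}"
  proof
    fix x assume "x \<in> f ` {..<N div m}"
    then obtain j where j: "j < N div m" "x = f j" by auto
    have "Suc j \<le> N div m" using j by simp
    then have "m * Suc j \<le> m * (N div m)" by (rule mult_left_mono) simp
    also have "\<dots> \<le> N" by simp
    finally have "m * j + m \<le> N" by simp
    then have "int (m * j + m) \<le> int N" by (simp only: of_nat_le_iff)
    then have "int m * int j + int m \<le> int N" by simp
    then have up: "x \<le> int N" using j assms(2) unfolding f_def by linarith
    have "(x - 1) mod int m = (int c + int m * int j) mod int m" using j unfolding f_def by simp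
    also have "\<dots> = int c mod int m" by simp
    also have "\<dots> = int c" using assms by simp
    finally show "x \<in> {i\<in>{1..int N}. nat ((i - 1) mod int m) = c}"
      using up j unfolding f_def by auto
  qed
  have "card {..<N div m} \<le> card {i\<in>{1..int N}. nat ((i - 1) mod int m) = c}"
    by (rule card_inj_on_le[OF inj sub]) (rule finite_subset[of _ "{1..int N}"], auto)
  then show ?thesis by simp
qed

lemma div_real_ge: "m > 0 \<Longrightarrow> real (N div m) \<ge> real N / real m - 1"
proof -
  assume m: "m > 0"
  have "N = m * (N div m) + N mod m" by simp
  moreover have "N mod m < m" using m by simp
  ultimately have "N < m * (N div m) + m" by linarith
  then have "real N < real m * real (N div m) + real m" by (metis of_nat_add of_nat_less_iff of_nat_mult)
  then have "real N / real m < real (N div m) + 1" using m by (simp add: field_simps)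
  then show ?thesis by simp
qed


lemma main_bound:
  fixes \<epsilon> :: real
  assumes k: "k > 0" and L: "L > 0" and e: "\<epsilon> > 0"
    and N1: "real N > 8 * (2*(real k*real L)+1)^2/(5*\<epsilon>^2) + 2*(2*(real k*real L)+1)"
    and N2: "real N \<ge> 8*(real k*real L)/\<epsilon>"
  shows "measure (P_N N \<gamma>) {\<omega> \<in> space (P_N N \<gamma>).
         \<bar>real (count_iso N L k g r \<omega>) / real N - mu \<gamma> L k g r\<bar> > \<epsilon>}
    < 2 * exp (- (\<epsilon>\<^sup>2 * real N / (8 * real k * real L + 2)))"
proof -
  interpret prob_space "P_N N \<gamma>" unfolding P_N_eq by (rule prob_PiM)
  define R where "R = int k * int L"
  define Rr where "Rr = real k * real L"
  define m where "m = 2*k*L+1"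
  define S where "S = {1..int N}"
  define X where "X = (\<lambda>i. Xv N L k g r i)"
  define ex where "ex = (\<lambda>i. integral\<^sup>L (P_N N \<gamma>) (X i))"
  define cl where "cl = (\<lambda>i::int. nat ((i - 1) mod int m))"
  define C where "C = (\<lambda>c. {i\<in>S. cl i = c})"
  define \<eta> where "\<eta> = \<epsilon> - 2*Rr/real N"
  define q where "q = N div m"
  define MU where "MU = mu \<gamma> L k g r"
  have kL1: "1 \<le> k * L" using k L by (simp add: Suc_le_eq)
  have Rr1: "Rr \<ge> 1" using kL1 unfolding Rr_def by (metis of_nat_1 of_nat_le_iff of_nat_mult)
  have RR: "real_of_int R = Rr" unfolding R_def Rr_def by simp
  have mm: "real m = 2*Rr+1" unfolding m_def Rr_def by simp
  have mi: "int m = 2*R+1" unfolding m_def R_def by simp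
  have m0: "m > 0" unfolding m_def by simp
  have N1': "real N > 8 * (real m)^2/(5*\<epsilon>^2) + 2 * real m" using N1 mm Rr_def by simp
  have "8 * (real m)^2/(5*\<epsilon>^2) \<ge> 0" by simp
  then have Nm: "real N > 2 * real m" using N1' by linarith
  then have Npos: "real N > 0" by simp
  have NgeM: "N \<ge> m" using Nm by simp
  have m3: "m \<ge> 3" unfolding m_def using kL1 by simp
  have ne: "pairs_fin N \<noteq> {}"
  proof -
    have "{1, 3} \<in> pairs_fin N" unfolding pairs_fin_def using NgeM m3
      by (intro CollectI exI[of _ 1] exI[of _ 3]) simp
    then show ?thesis by auto
  qed
  have "\<epsilon> * real N \<ge> 8 * Rr" using N2 e unfolding Rr_def by (simp add: divide_le_eq mult.commute)
  then have "2*Rr/real N \<le> \<epsilon>/4" using Npos by (simp add: divide_le_eq)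
  then have eta0: "\<eta> \<ge> 0" unfolding \<eta>_def using e by simp
  have finS: "finite S" unfolding S_def by simp
  have clS: "cl ` S \<subseteq> {..<m}" unfolding cl_def using m0 by (auto simp: nat_less_iff)
  have group: "(\<Sum>c<m. \<Sum>i\<in>C c. f i) = (\<Sum>i\<in>S. f i)" for f :: "int \<Rightarrow> real"
    unfolding C_def by (rule sum.group[OF finS _ clS]) simp
  have Cfin: "finite (C c)" for c unfolding C_def using finS by simp
  have Ccard: "q \<le> card (C c)" if "c < m" for c
    unfolding q_def C_def S_def cl_def by (rule cls_card[OF m0 that])
  have "0 < N div m" using NgeM m0 by (subst div_greater_zero_iff) simp
  then have q1: "q \<ge> 1" unfolding q_def by simp
  have Cne: "C c \<noteq> {}" if "c < m" for c using Ccard[OF that] q1 by auto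
  have sep: "2 * (int k * int L) + 1 \<le> \<bar>i - j\<bar>" if "i \<in> C c" "j \<in> C c" "i \<noteq> j" for c i j
  proof -
    have "cl i = cl j" using that unfolding C_def by simp
    then have "int m \<le> \<bar>i - j\<bar>" unfolding cl_def by (rule cls_sep[OF m0 _ that(3)])
    then show ?thesis using mi R_def by simp
  qed
  define B where "B = (\<lambda>c. {\<omega> \<in> space (P_N N \<gamma>). \<eta> * card (C c) \<le>
      \<bar>(\<Sum>i\<in>C c. X i \<omega>) - (\<Sum>i\<in>C c. ex i)\<bar>})"
  define A where "A = {\<omega> \<in> space (P_N N \<gamma>).
         \<bar>real (count_iso N L k g r \<omega>) / real N - mu \<gamma> L k g r\<bar> > \<epsilon>}"
  have hB: "measure (P_N N \<gamma>) (B c) \<le> 2 * exp (- 2 * \<eta>^2 * q)" if "c < m" for c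
  proof -
    have "measure (P_N N \<gamma>) (B c) \<le> 2 * exp (- 2 * \<eta>^2 * card (C c))"
      unfolding B_def X_def ex_def
      by (rule class_hoeff[OF ne Cfin Cne[OF that] _ eta0]) (rule sep)
    also have "\<dots> \<le> 2 * exp (- 2 * \<eta>^2 * q)"
      using Ccard[OF that] by (simp add: mult_left_mono)
    finally show ?thesis .
  qed
  have cardsum: "(\<Sum>c<m. real (card (C c))) = real N"
    using group[of "\<lambda>_. 1"] unfolding S_def by simp
  have bnd: "\<bar>(\<Sum>i\<in>S. ex i) - real N * MU\<bar> \<le> 2 * Rr"
    using boundary[OF R_def, of N \<gamma> g r] RR unfolding S_def ex_def X_def MU_def by simp
  have incl: "A \<subseteq> (\<Union>c\<in>{..<m}. B c)"
  proof
    fix \<omega> assume \<omega>A: "\<omega> \<in> A"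
    show "\<omega> \<in> (\<Union>c\<in>{..<m}. B c)"
    proof (rule ccontr)
      assume "\<omega> \<notin> (\<Union>c\<in>{..<m}. B c)"
      then have lt: "\<bar>(\<Sum>i\<in>C c. X i \<omega>) - (\<Sum>i\<in>C c. ex i)\<bar> < \<eta> * card (C c)" if "c < m" for c
        using that \<omega>A unfolding B_def A_def by (auto simp: not_le)
      have "\<bar>(\<Sum>i\<in>S. X i \<omega>) - (\<Sum>i\<in>S. ex i)\<bar> = \<bar>\<Sum>c<m. ((\<Sum>i\<in>C c. X i \<omega>) - (\<Sum>i\<in>C c. ex i))\<bar>"
        by (simp add: sum_subtractf group)
      also have "\<dots> \<le> (\<Sum>c<m. \<bar>(\<Sum>i\<in>C c. X i \<omega>) - (\<Sum>i\<in>C c. ex i)\<bar>)" by (rule sum_abs)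
      also have "\<dots> < (\<Sum>c<m. \<eta> * card (C c))"
        by (rule sum_strict_mono) (use m0 lt in auto)
      also have "\<dots> = \<eta> * real N" by (simp only: sum_distrib_left[symmetric] cardsum)
      finally have d1: "\<bar>(\<Sum>i\<in>S. X i \<omega>) - (\<Sum>i\<in>S. ex i)\<bar> < \<eta> * real N" .
      have cs: "real (count_iso N L k g r \<omega>) = (\<Sum>i\<in>S. X i \<omega>)"
        unfolding S_def X_def by (rule count_sum)
      have "\<bar>real (count_iso N L k g r \<omega>) - real N * MU\<bar> < \<eta> * real N + 2 * Rr"
        using d1 bnd cs by linarith
      also have "\<eta> * real N + 2 * Rr = \<epsilon> * real N" unfolding \<eta>_def using Npos by (simp add: field_simps)
      finally have "\<bar>real (count_iso N L k g r \<omega>) - real N * MU\<bar> / real N < \<epsilon>"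
        using Npos by (simp add: divide_less_eq)
      moreover have "\<bar>real (count_iso N L k g r \<omega>) - real N * MU\<bar> / real N
          = \<bar>real (count_iso N L k g r \<omega>) / real N - MU\<bar>"
        using Npos by (simp add: field_simps)
      ultimately show False using \<omega>A unfolding A_def MU_def by simp
    qed
  qed
  have setsP: "X' \<in> sets (P_N N \<gamma>)" if "X' \<subseteq> space (P_N N \<gamma>)" for X'
    using that sets_fin[OF finite_pairs_fin, of N \<gamma>] unfolding P_N_eq by auto
  have "measure (P_N N \<gamma>) A \<le> measure (P_N N \<gamma>) (\<Union>c\<in>{..<m}. B c)"
    by (rule finite_measure_mono[OF incl]) (rule setsP, auto simp: B_def)
  also have "\<dots> \<le> (\<Sum>c<m. measure (P_N N \<gamma>) (B c))"
    by (rule finite_measure_subadditive_finite) (auto intro!: setsP simp: B_def)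
  also have "\<dots> \<le> (\<Sum>c<m. 2 * exp (- 2 * \<eta>^2 * q))"
    by (rule sum_mono) (rule hB, simp)
  also have "\<dots> = 2 * ((2*Rr+1) * exp (-2 * (\<epsilon> - 2*Rr/real N)^2 * real q))"
    using mm unfolding \<eta>_def by simp
  also have "\<dots> < 2 * exp (- (\<epsilon>^2 * real N / (8*Rr+2)))"
  proof -
    have "real q \<ge> real N / real m - 1" unfolding q_def by (rule div_real_ge[OF m0])
    then have "real q \<ge> real N / (2*Rr+1) - 1" using mm by simp
    then have "(2*Rr+1) * exp (-2 * (\<epsilon> - 2*Rr/real N)^2 * real q) < exp (- (\<epsilon>^2 * real N / (8*Rr+2)))"
      using N1 N2 by (intro arith_final[OF e Rr1 Npos]) (auto simp: Rr_def)
    then show ?thesis by simp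
  qed
  also have "8*Rr+2 = 8 * real k * real L + 2" unfolding Rr_def by simp
  finally show ?thesis unfolding A_def .
qed

theorem lemma9:
  fixes \<gamma> \<epsilon> :: real and k L :: nat and g :: igraph and r :: int
  assumes "\<gamma> > 0" and "k > 0" and "L > 0" and "\<epsilon> > 0"
    and "is_rooted_graph g r"
  shows "\<exists>N0. \<forall>N\<ge>N0.
    measure (P_N N \<gamma>)
      {\<omega> \<in> space (P_N N \<gamma>).
         \<bar>real (count_iso N L k g r \<omega>) / real N - mu \<gamma> L k g r\<bar> > \<epsilon>}
    < 2 * exp (- (\<epsilon>\<^sup>2 * real N / (8 * real k * real L + 2)))"
proof -
  define a where "a = 8 * (2*(real k*real L)+1)^2/(5*\<epsilon>^2)"
  define b where "b = 2*(2*(real k*real L)+1)"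
  define c where "c = 8*(real k*real L)/\<epsilon>"
  have a0: "a \<ge> 0" unfolding a_def by simp
  have b0: "b \<ge> 0" unfolding b_def by simp
  have c0: "c \<ge> 0" unfolding c_def using assms(4) by simp
  define N0 where "N0 = nat \<lceil>a + b + c\<rceil> + 1"
  show ?thesis
  proof (intro exI[of _ N0] allI impI)
    fix N assume N: "N0 \<le> N"
    have "a + b + c \<le> real (nat \<lceil>a + b + c\<rceil>)"
      by linarith
    also have "\<dots> < real N0" unfolding N0_def by simp
    also have "\<dots> \<le> real N" using N by simp
    finally have V: "a + b + c < real N" .
    show "measure (P_N N \<gamma>)
      {\<omega> \<in> space (P_N N \<gamma>).
         \<bar>real (count_iso N L k g r \<omega>) / real N - mu \<gamma> L k g r\<bar> > \<epsilon>}
      < 2 * exp (- (\<epsilon>\<^sup>2 * real N / (8 * real k * real L + 2)))"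
    proof (rule main_bound[OF assms(2,3,4)])
      show "real N > 8 * (2*(real k*real L)+1)^2/(5*\<epsilon>^2) + 2*(2*(real k*real L)+1)"
        using V c0 unfolding a_def b_def by linarith
      show "real N \<ge> 8*(real k*real L)/\<epsilon>"
        using V a0 b0 unfolding c_def by linarith
    qed
  qed
qed

end
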